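(* As $k$ ranges over $\mathbb{Z}$, the Eells–Kuiper invariant $\mu(Q^{15}_k)$, regarded as the (unordered) pair of values $\frac{k(k+1)}{2^{8}\cdot127}\pm\frac{2k+1}{2^{9}}\mod 1$ corresponding to the two spin structures of $Q^{15}_k$, takes exactly 4096 different pairs of values.
   Context: $Q^{15}_k=M^{15}_k/\tau$ is the Shimada projective space: $M^{15}_k$ is the Shimada sphere $D^8\times S^7\sqcup D^8\times S^7/\sim$ glued along $S^7\times S^7$ via $f(x)(y)=x^{k+1}yx^{-k}$ (octonion multiplication), and $\tau$ is the free involution induced by $(x,y)\mapsto(x,-y)$. Its Eells–Kuiper invariant for its two spin structures is $\frac{k(k+1)}{2^8\cdot127}\pm\frac{2k+1}{2^9}\mod1$. *)

theory Defs
  imports Complex_Main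
begin

text \<open>Eells--Kuiper invariant of the Shimada projective space Q^15_k, as given in the
  paper: for the two spin structures it equals
  k(k+1)/(2^8 * 127) +- (2k+1)/2^9  mod 1.
  Values mod 1 are represented by their representatives in [0,1) (via frac);
  the invariant is the unordered pair, i.e. the set of the two values.\<close>

definition EK_value :: "int \<Rightarrow> bool \<Rightarrow> rat" where
  "EK_value k s = frac (of_int (k * (k + 1)) / (2^8 * 127)
                        + (if s then 1 else -1) * of_int (2 * k + 1) / 2^9)"

definition EK_pair :: "int \<Rightarrow> rat set" where
  "EK_pair k = {EK_value k True, EK_value k False}"

end

theory Submission
  imports Defs
begin

lemma frac_div_int:
  fixes a n :: int assumes "n > 0"
  shows "frac (of_int a / of_int n :: rat) = of_int (a mod n) / of_int n"
proof -
  have f: "floor (of_int a / of_int n :: rat) = a div n" by (rule floor_divide_of_int_eq)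
  have m: "a mod n = a - n * (a div n)" by (simp add: minus_div_mult_eq_mod[symmetric] mult.commute)
  have "of_int (a mod n) / of_int n = (of_int a - of_int n * of_int (a div n)) / (of_int n :: rat)"
    unfolding m by simp
  also have "\<dots> = of_int a / of_int n - of_int (a div n)" using assms by (simp add: diff_divide_distrib)
  finally show ?thesis unfolding frac_def f by simp
qed

lemma cop: "coprime (127::int) 256"
proof (rule coprimeI)
  fix c :: int assume "c dvd 127" "c dvd 256"
  have a: "c dvd (127::int) * 127" by (rule dvd_mult2) fact
  have b: "c dvd (63::int) * 256" by (rule dvd_mult) fact
  have "c dvd 127 * 127 - 63 * 256" by (rule dvd_diff[OF a b])
  then have "c dvd 1" by simp
  then show "is_unit c" by simp
qed

definition FF :: "int \<Rightarrow> rat" where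
  "FF x = frac (of_int (2 * x^2 - 8065) / 65024)"

lemma FF_mod: "FF x = of_int ((2 * x^2 - 8065) mod 65024) / 65024"
proof -
  have "FF x = frac (of_int (2 * x^2 - 8065) / of_int 65024)" unfolding FF_def by simp
  also have "\<dots> = of_int ((2 * x^2 - 8065) mod 65024) / of_int 65024"
    by (rule frac_div_int) simp
  finally show ?thesis by simp
qed


lemma cA: "card ((\<lambda>x. x^2 mod 127) ` {0..<127::int}) = 64"
  by code_simp

lemma cB: "card ((\<lambda>x. (min (x^2 mod 256) ((x+1)^2 mod 256), max (x^2 mod 256) ((x+1)^2 mod 256))) ` {0..<128::int}) = 64"
  by code_simp


lemma FF_eq: "FF x = FF y \<longleftrightarrow> x^2 mod 127 = y^2 mod 127 \<and> x^2 mod 256 = y^2 mod 256"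
proof -
  have "FF x = FF y \<longleftrightarrow> (2 * x^2 - 8065) mod 65024 = (2 * y^2 - 8065) mod 65024"
    unfolding FF_mod by simp
  also have "\<dots> \<longleftrightarrow> 65024 dvd (2 * x^2 - 8065) - (2 * y^2 - 8065)"
    by (rule mod_eq_dvd_iff)
  also have "\<dots> \<longleftrightarrow> 2 * 32512 dvd 2 * (x^2 - y^2)"
    by (simp add: algebra_simps)
  also have "\<dots> \<longleftrightarrow> 32512 dvd (x^2 - y^2)"
    by (rule dvd_times_left_cancel_iff) simp
  also have "\<dots> \<longleftrightarrow> 127 dvd (x^2 - y^2) \<and> 256 dvd (x^2 - y^2)"
  proof
    assume "32512 dvd (x^2 - y^2)"
    then obtain q where q: "x^2 - y^2 = 32512 * q" by (elim dvdE)
    have "x^2 - y^2 = 127 * (256 * q)" "x^2 - y^2 = 256 * (127 * q)" using q by simp_all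
    then show "127 dvd (x^2 - y^2) \<and> 256 dvd (x^2 - y^2)" by (metis dvd_triv_left)
  next
    assume "127 dvd (x^2 - y^2) \<and> 256 dvd (x^2 - y^2)"
    then have "127 * 256 dvd (x^2 - y^2)" using divides_mult cop by blast
    then show "32512 dvd (x^2 - y^2)" by simp
  qed
  also have "\<dots> \<longleftrightarrow> x^2 mod 127 = y^2 mod 127 \<and> x^2 mod 256 = y^2 mod 256"
    by (simp add: mod_eq_dvd_iff)
  finally show ?thesis .
qed

lemma EKv_T: "EK_value k True = FF (k + 64)"
  unfolding EK_value_def FF_def by (rule arg_cong[where f=frac]) (simp add: field_simps power2_eq_square)

lemma EKv_F: "EK_value k False = FF (k - 63)"
  unfolding EK_value_def FF_def by (rule arg_cong[where f=frac]) (simp add: field_simps power2_eq_square)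

lemma R127: "(m - 127)^2 mod 127 = (m::int)^2 mod 127"
proof -
  have "(m - 127)^2 - m^2 = 127 * (127 - 2 * m)" by (simp add: power2_eq_square algebra_simps)
  then show ?thesis by (simp add: mod_eq_dvd_iff)
qed

lemma T256: "(m - 127)^2 mod 256 = ((m::int) + 1)^2 mod 256"
proof -
  have "(m - 127)^2 - (m + 1)^2 = 256 * (63 - m)" by (simp add: power2_eq_square algebra_simps)
  then show ?thesis by (simp add: mod_eq_dvd_iff)
qed

definition RR :: "int \<Rightarrow> int" where "RR x = x^2 mod 127"
definition TT :: "int \<Rightarrow> int" where "TT x = x^2 mod 256"
definition PP :: "int \<Rightarrow> int \<times> int" where "PP x = (min (TT x) (TT (x+1)), max (TT x) (TT (x+1)))"
definition Phi :: "int \<Rightarrow> int \<times> int \<times> int" where "Phi k = (RR (k + 64), PP (k + 64))"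

lemma FF_eq': "FF x = FF y \<longleftrightarrow> RR x = RR y \<and> TT x = TT y"
  unfolding RR_def TT_def by (rule FF_eq)

lemma EK_pair_alt: "EK_pair k = {FF (k + 64), FF ((k + 64) - 127)}"
  unfolding EK_pair_def EKv_T EKv_F by (simp add: algebra_simps)

lemma RR_shift: "RR (m - 127) = RR m" unfolding RR_def by (rule R127)
lemma TT_shift: "TT (m - 127) = TT (m + 1)" unfolding TT_def by (rule T256)

lemma minmax_eq: "((min (a::int) b, max a b) = (min c d, max c d)) \<longleftrightarrow>
   ((a = c \<and> b = d) \<or> (a = d \<and> b = c))"
  by (auto simp: min_def max_def)

lemma key: "EK_pair k = EK_pair j \<longleftrightarrow> Phi k = Phi j"
proof -
  define m where "m = k + 64"
  define n where "n = j + 64"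
  have "EK_pair k = EK_pair j \<longleftrightarrow> {FF m, FF (m - 127)} = {FF n, FF (n - 127)}"
    unfolding EK_pair_alt m_def n_def ..
  also have "\<dots> \<longleftrightarrow> (FF m = FF n \<and> FF (m - 127) = FF (n - 127)) \<or> (FF m = FF (n - 127) \<and> FF (m - 127) = FF n)"
    by (rule doubleton_eq_iff)
  also have "\<dots> \<longleftrightarrow> RR m = RR n \<and> ((TT m = TT n \<and> TT (m+1) = TT (n+1)) \<or> (TT m = TT (n+1) \<and> TT (m+1) = TT n))"
    unfolding FF_eq' RR_shift TT_shift by blast
  also have "\<dots> \<longleftrightarrow> Phi k = Phi j"
    unfolding Phi_def PP_def m_def[symmetric] n_def[symmetric] using minmax_eq by auto
  finally show ?thesis .
qed

lemma card_range_transfer: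
  assumes "\<And>x y. f x = f y \<longleftrightarrow> g x = g y"
  shows "card (range f) = card (range g)"
proof -
  define F where "F z = f (SOME x. g x = z)" for z
  have Fg: "F (g x) = f x" for x
  proof -
    have "g (SOME y. g y = g x) = g x" by (rule someI) (rule refl)
    then show ?thesis unfolding F_def using assms by blast
  qed
  have "range f = F ` range g" using Fg by (auto simp: image_iff)
  moreover have "inj_on F (range g)"
    by (auto simp: inj_on_def Fg assms)
  ultimately show ?thesis by (simp add: card_image)
qed

lemma TT_mod: "TT x = TT (x mod 128)"
proof -
  define r where "r = x mod 128"
  define q where "q = x div 128"
  have x: "x = 128 * q + r" unfolding r_def q_def by simp
  have "x^2 - r^2 = 256 * (q * (64 * q + r))" unfolding x by (simp add: power2_eq_square algebra_simps)
  then show ?thesis unfolding TT_def r_def[symmetric] by (simp add: mod_eq_dvd_iff)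
qed

lemma RR_mod: "RR x = RR (x mod 127)"
  unfolding RR_def by (simp add: power_mod)

lemma range_Phi: "range Phi = ((\<lambda>x. x^2 mod 127) ` {0..<127::int}) \<times>
   ((\<lambda>x. (min (x^2 mod 256) ((x+1)^2 mod 256), max (x^2 mod 256) ((x+1)^2 mod 256))) ` {0..<128::int})"
  (is "_ = ?A \<times> ?B")
proof
  show "range Phi \<subseteq> ?A \<times> ?B"
  proof
    fix z assume "z \<in> range Phi"
    then obtain k where z: "z = Phi k" by auto
    define m where "m = k + 64"
    have "RR m = RR (m mod 127)" by (rule RR_mod)
    then have a: "RR m \<in> ?A" unfolding RR_def by auto
    have "TT m = TT (m mod 128)" "TT (m + 1) = TT (m mod 128 + 1)"
      using TT_mod[of m] TT_mod[of "m+1"] TT_mod[of "m mod 128 + 1"] by (simp_all add: mod_add_left_eq)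
    then have "PP m = PP (m mod 128)" unfolding PP_def by simp
    then have b: "PP m \<in> ?B" unfolding PP_def TT_def by auto
    show "z \<in> ?A \<times> ?B" using a b unfolding z Phi_def m_def by simp
  qed
next
  show "?A \<times> ?B \<subseteq> range Phi"
  proof
    fix z assume "z \<in> ?A \<times> ?B"
    then obtain a b where z: "z = (RR a, PP b)" unfolding RR_def PP_def TT_def by auto
    define m where "m = a + 127 * (a - b)"
    have "m mod 127 = a mod 127" unfolding m_def by (rule mod_mult_self2)
    then have r: "RR m = RR a" using RR_mod by metis
    have e1: "m = b + 128 * (a - b)" unfolding m_def by simp
    have e2: "m + 1 = (b + 1) + 128 * (a - b)" unfolding m_def by simp
    have "m mod 128 = b mod 128" unfolding e1 by (rule mod_mult_self2)
    moreover have "(m + 1) mod 128 = (b + 1) mod 128" unfolding e2 by (rule mod_mult_self2)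
    ultimately have "m mod 128 = b mod 128" "(m + 1) mod 128 = (b + 1) mod 128" by simp_all
    then have "TT m = TT b" "TT (m + 1) = TT (b + 1)" using TT_mod by metis+
    then have p: "PP m = PP b" unfolding PP_def by simp
    have "Phi (m - 64) = z" unfolding Phi_def z using r p by simp
    then show "z \<in> range Phi" by (metis rangeI)
  qed
qed

theorem proposition4p9:
  shows "finite (range EK_pair) \<and> card (range EK_pair) = 4096"
proof -
  have "card (range EK_pair) = card (range Phi)" by (rule card_range_transfer) (rule key)
  also have "\<dots> = 64 * 64" unfolding range_Phi card_cartesian_product cA cB by simp
  finally have c: "card (range EK_pair) = 4096" by simp
  then have "finite (range EK_pair)" by (metis card.infinite zero_neq_numeral)
  with c show ?thesis by simp
qed

end
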